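(* Let $F$ be a lean multi-clause-set with $n(F) > 0$. Then $\mathrm{minvdeg}(F) \le \mathrm{N}(\sigma(F))$. More precisely, there exists a variable $v \in \mathrm{var}(F)$ with $\mathrm{vdeg}_F(v) \le \mathrm{N}(\sigma(F))$ and $\mathrm{ld}_F(v) \le \sigma(F)$, $\mathrm{ld}_F(\overline{v}) \le \sigma(F)$.
   Context: Literals come with a fixed-point-free involution $x \mapsto \overline{x}$; variables are the positive literals, $\mathrm{var}(x)$ the underlying variable. A clause is a finite set $C$ of literals with $C \cap \overline{C} = \emptyset$. A multi-clause-set is a map $F$ from clauses to $\mathbb{N}_0$ with finitely many clauses of nonzero multiplicity; its underlying clause-set is the set of clauses with nonzero multiplicity. $\mathrm{var}(F)$ is the set of variables occurring in it, $n(F) = |\mathrm{var}(F)|$, $c(F) = \sum_C F(C)$, $\delta(F) = c(F) - n(F)$. Literal degree $\mathrm{ld}_F(x) = \sum_{C \ni x} F(C)$; $\mathrm{vdeg}_F(v) = \mathrm{ld}_F(v) + \mathrm{ld}_F(\overline{v})$; $\mathrm{minvdeg}(F) = \min_{v \in \mathrm{var}(F)} \mathrm{vdeg}_F(v)$ (and $+\infty$ if $n(F)=0$). Surplus: if $n(F) > 0$, $\sigma(F) = \min_{\emptyset \ne V \subseteq \mathrm{var}(F)} \big( \sum_{C : \mathrm{var}(C) \cap V \ne \emptyset} F(C) - |V| \big)$, and $\sigma(F) = 0$ if $n(F)=0$. A partial assignment is a map $\varphi : V \to \{0,1\}$ for a finite set $V$ of variables, with $\varphi(\overline{v}) = 1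 - \varphi(v)$; it is an autarky for a clause-set $G$ if every clause $C \in G$ containing a literal falsified by $\varphi$ also contains a literal satisfied by $\varphi$. A clause-set $G$ is lean if there is no autarky $\varphi$ for $G$ with $\mathrm{var}(\varphi) \cap \mathrm{var}(G) \ne \emptyset$; a multi-clause-set is lean iff its underlying clause-set is. The function $\mathrm{N} : \mathbb{N} \to \mathbb{N}$ is defined by $\mathrm{N}(1) = 2$ and $\mathrm{N}(k) = \max_{i \in \{2,\dots,k\}} \min(2i, \mathrm{N}(k-i+1)+i)$ for $k \ge 2$. *)

theory Defs
  imports Main "HOL-Library.Multiset" "HOL-Library.Extended_Nat"
begin

datatype 'v lit = Pos 'v | Neg 'v

fun comp :: "'v lit \<Rightarrow> 'v lit" where
  "comp (Pos v) = Neg v"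
| "comp (Neg v) = Pos v"

fun var_lit :: "'v lit \<Rightarrow> 'v" where
  "var_lit (Pos v) = v"
| "var_lit (Neg v) = v"

definition clause :: "'v lit set \<Rightarrow> bool" where
  "clause C \<longleftrightarrow> finite C \<and> C \<inter> comp ` C = {}"

definition vars_cl :: "'v lit set \<Rightarrow> 'v set" where
  "vars_cl C = var_lit ` C"

definition multi_clause_set :: "'v lit set multiset \<Rightarrow> bool" where
  "multi_clause_set F \<longleftrightarrow> (\<forall>C \<in># F. clause C)"

definition vars_cs :: "'v lit set set \<Rightarrow> 'v set" where
  "vars_cs G = (\<Union>C\<in>G. vars_cl C)"

definition vars :: "'v lit set multiset \<Rightarrow> 'v set" where
  "vars F = vars_cs (set_mset F)"

definition nvars :: "'v lit set multiset \<Rightarrow> nat" where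
  "nvars F = card (vars F)"

definition ld :: "'v lit set multiset \<Rightarrow> 'v lit \<Rightarrow> nat" where
  "ld F x = size (filter_mset (\<lambda>C. x \<in> C) F)"

definition vdeg :: "'v lit set multiset \<Rightarrow> 'v \<Rightarrow> nat" where
  "vdeg F v = ld F (Pos v) + ld F (Neg v)"

definition minvdeg :: "'v lit set multiset \<Rightarrow> enat" where
  "minvdeg F = (if vars F = {} then \<infinity> else enat (Min (vdeg F ` vars F)))"

definition surplus :: "'v lit set multiset \<Rightarrow> int" where
  "surplus F = (if vars F = {} then 0 else
     Min {int (size (filter_mset (\<lambda>C. vars_cl C \<inter> V \<noteq> {}) F)) - int (card V)
          | V. V \<noteq> {} \<and> V \<subseteq> vars F})"

fun lit_val :: "('v \<rightharpoonup> bool) \<Rightarrow> 'v lit \<Rightarrow> bool option" where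
  "lit_val \<phi> (Pos v) = \<phi> v"
| "lit_val \<phi> (Neg v) = map_option Not (\<phi> v)"

definition autarky :: "('v \<rightharpoonup> bool) \<Rightarrow> 'v lit set set \<Rightarrow> bool" where
  "autarky \<phi> G \<longleftrightarrow> (\<forall>C\<in>G. (\<exists>x\<in>C. lit_val \<phi> x = Some False) \<longrightarrow> (\<exists>x\<in>C. lit_val \<phi> x = Some True))"

definition lean_cs :: "'v lit set set \<Rightarrow> bool" where
  "lean_cs G \<longleftrightarrow> \<not> (\<exists>\<phi>. finite (dom \<phi>) \<and> autarky \<phi> G \<and> dom \<phi> \<inter> vars_cs G \<noteq> {})"

definition lean :: "'v lit set multiset \<Rightarrow> bool" where
  "lean F \<longleftrightarrow> lean_cs (set_mset F)"

text \<open>N(1) = 2, N(k) = max over i in 2..k of min(2i, N(k-i+1)+i); N 0 := 2 (outside the paper's domain).\<close>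
function N :: "nat \<Rightarrow> nat" where
  "N k = (if k \<le> 1 then 2 else Max ((\<lambda>i. min (2*i) (N (k - i + 1) + i)) ` {2..k}))"
  by auto
termination
  by (relation "measure id") auto

end

theory Submission
  imports Defs
begin


declare N.simps[simp del]

lemma size_filter_mono:
  assumes "\<And>C. C \<in># M \<Longrightarrow> P C \<Longrightarrow> Q C"
  shows "size (filter_mset P M) \<le> size (filter_mset Q M)"
  using assms by (induction M) auto

lemma size_filter_or:
  "size (filter_mset P M) + size (filter_mset Q M)
   = size (filter_mset (\<lambda>x. P x \<or> Q x) M) + size (filter_mset (\<lambda>x. P x \<and> Q x) M)"
  by (induction M) auto

lemma size_filter_split:
  "size M = size (filter_mset P M) + size (filter_mset (\<lambda>x. \<not> P x) M)"
  by (induction M) auto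

lemma size_filter_zero:
  assumes "\<And>C. C \<in># M \<Longrightarrow> \<not> P C"
  shows "size (filter_mset P M) = 0"
  using assms by (induction M) auto

lemma finite_vars: "multi_clause_set F \<Longrightarrow> finite (vars F)"
  unfolding multi_clause_set_def vars_def vars_cs_def vars_cl_def clause_def by auto

lemma var_lit_eq: "var_lit y = var_lit x \<Longrightarrow> y = x \<or> y = comp x"
  by (cases x; cases y) auto

lemma var_comp[simp]: "var_lit (comp x) = var_lit x"
  by (cases x) auto

lemma comp_comp[simp]: "comp (comp x) = x"
  by (cases x) auto

lemma comp_neq[simp]: "comp x \<noteq> x"
  by (cases x) auto

lemma lit_val_dom: "lit_val \<phi> y = Some b \<Longrightarrow> var_lit y \<in> dom \<phi>"
  by (cases y) auto

lemma lit_val_cong: "\<phi> (var_lit y) = \<psi> (var_lit y) \<Longrightarrow> lit_val \<phi> y = lit_val \<psi> y"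
  by (cases y) auto

lemma clause_not_both:
  assumes "clause C" "Pos w \<in> C" "Neg w \<in> C" shows False
proof -
  have "Neg w \<in> comp ` C" using assms(2) by force
  then show False using assms unfolding clause_def by blast
qed

lemma vars_iff: "u \<in> vars F \<longleftrightarrow> (\<exists>C. C \<in># F \<and> u \<in> vars_cl C)"
  unfolding vars_def vars_cs_def by auto

lemma vars_cl_iff: "u \<in> vars_cl C \<longleftrightarrow> (\<exists>y\<in>C. var_lit y = u)"
  unfolding vars_cl_def by auto

lemma ld_pos_iff: "ld F x > 0 \<longleftrightarrow> (\<exists>C. C \<in># F \<and> x \<in> C)"
  unfolding ld_def by (induction F) auto

definition cnt :: "'v lit set multiset \<Rightarrow> 'v set \<Rightarrow> nat" where
  "cnt F W = size (filter_mset (\<lambda>C. vars_cl C \<inter> W \<noteq> {}) F)"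

lemma surplus_set_eq:
  "{int (size (filter_mset (\<lambda>C. vars_cl C \<inter> V \<noteq> {}) F)) - int (card V) | V. V \<noteq> {} \<and> V \<subseteq> vars F}
   = (\<lambda>V. int (cnt F V) - int (card V)) ` {V. V \<noteq> {} \<and> V \<subseteq> vars F}"
  unfolding cnt_def by auto

lemma surplus_alt: "vars F \<noteq> {} \<Longrightarrow>
  surplus F = Min ((\<lambda>V. int (cnt F V) - int (card V)) ` {V. V \<noteq> {} \<and> V \<subseteq> vars F})"
  unfolding surplus_def surplus_set_eq by simp

lemma surplus_le:
  assumes "finite (vars F)" "V \<noteq> {}" "V \<subseteq> vars F"
  shows "surplus F \<le> int (cnt F V) - int (card V)"
proof -
  have fin: "finite {V. V \<noteq> {} \<and> V \<subseteq> vars F}" by (rule finite_subset[of _ "Pow (vars F)"]) (use assms(1) in auto)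
  show ?thesis using assms
    proof -
    have "surplus F = Min ((\<lambda>V. int (cnt F V) - int (card V)) ` {V. V \<noteq> {} \<and> V \<subseteq> vars F})"
      using assms(2,3) by (intro surplus_alt) blast
    also have "\<dots> \<le> int (cnt F V) - int (card V)"
      by (rule Min_le) (use fin assms in auto)
    finally show ?thesis .
  qed
qed

lemma surplus_attained:
  assumes "finite (vars F)" "vars F \<noteq> {}"
  shows "\<exists>V. V \<noteq> {} \<and> V \<subseteq> vars F \<and> surplus F = int (cnt F V) - int (card V)"
proof -
  let ?S = "{V. V \<noteq> {} \<and> V \<subseteq> vars F}"
  let ?f = "\<lambda>V. int (cnt F V) - int (card V)"
  have fin: "finite ?S" by (rule finite_subset[of _ "Pow (vars F)"]) (use assms(1) in auto)
  have ne: "?S \<noteq> {}" using assms(2) by auto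
  have "Min (?f ` ?S) \<in> ?f ` ?S" by (rule Min_in) (use fin ne in auto)
  then obtain V where V: "V \<in> ?S" "Min (?f ` ?S) = ?f V" by (auto simp del: of_nat_diff)
  have "surplus F = Min (?f ` ?S)" by (rule surplus_alt[OF assms(2)])
  then show ?thesis using V by (intro exI[of _ V]) simp
qed

lemma surplus_ge:
  assumes "finite (vars F)" "vars F \<noteq> {}"
    "\<And>V. V \<noteq> {} \<Longrightarrow> V \<subseteq> vars F \<Longrightarrow> k \<le> int (cnt F V) - int (card V)"
  shows "k \<le> surplus F"
proof -
  obtain V where "V \<noteq> {}" "V \<subseteq> vars F" "surplus F = int (cnt F V) - int (card V)"
    using surplus_attained[OF assms(1,2)] by blast
  then show ?thesis using assms(3) by simp
qed

lemma cnt_le_size: "cnt F W \<le> size F"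
  unfolding cnt_def by simp

lemma lean_ld_pos:
  assumes "lean F" "v \<in> vars F"
  shows "ld F (Pos v) > 0" "ld F (Neg v) > 0"
proof -
  show "ld F (Pos v) > 0"
  proof (rule ccontr)
    assume "\<not> ?thesis"
    then have np: "\<And>C. C \<in># F \<Longrightarrow> Pos v \<notin> C" using ld_pos_iff[of F "Pos v"] by auto
    let ?phi = "[v \<mapsto> False]"
    have "autarky ?phi (set_mset F)"
      unfolding autarky_def
    proof (intro ballI impI)
      fix C assume C: "C \<in> set_mset F" "\<exists>x\<in>C. lit_val ?phi x = Some False"
      then obtain y where y: "y \<in> C" "lit_val ?phi y = Some False" by blast
      then have "y = Pos v" by (cases y) (auto split: if_splits)
      then have False using np[of C] C(1) y(1) by simp
      then show "\<exists>x\<in>C. lit_val ?phi x = Some True" by blast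
    qed
    moreover have "v \<in> dom ?phi \<inter> vars_cs (set_mset F)" using assms(2) by (simp add: vars_def)
    ultimately have "\<exists>\<phi>. finite (dom \<phi>) \<and> autarky \<phi> (set_mset F) \<and> dom \<phi> \<inter> vars_cs (set_mset F) \<noteq> {}"
      by (intro exI[of _ ?phi]) auto
    then show False using assms(1) unfolding lean_def lean_cs_def by blast
  qed
  show "ld F (Neg v) > 0"
  proof (rule ccontr)
    assume "\<not> ?thesis"
    then have np: "\<And>C. C \<in># F \<Longrightarrow> Neg v \<notin> C" using ld_pos_iff[of F "Neg v"] by auto
    let ?phi = "[v \<mapsto> True]"
    have "autarky ?phi (set_mset F)"
      unfolding autarky_def
    proof (intro ballI impI)
      fix C assume C: "C \<in> set_mset F" "\<exists>x\<in>C. lit_val ?phi x = Some False"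
      then obtain y where y: "y \<in> C" "lit_val ?phi y = Some False" by blast
      then have "y = Neg v" by (cases y) (auto split: if_splits)
      then have False using np[of C] C(1) y(1) by simp
      then show "\<exists>x\<in>C. lit_val ?phi x = Some True" by blast
    qed
    moreover have "v \<in> dom ?phi \<inter> vars_cs (set_mset F)" using assms(2) by (simp add: vars_def)
    ultimately have "\<exists>\<phi>. finite (dom \<phi>) \<and> autarky \<phi> (set_mset F) \<and> dom \<phi> \<inter> vars_cs (set_mset F) \<noteq> {}"
      by (intro exI[of _ ?phi]) auto
    then show False using assms(1) unfolding lean_def lean_cs_def by blast
  qed
qed



definition litsof :: "'v set \<Rightarrow> 'v lit set" where
  "litsof V = {y. var_lit y \<in> V}"

definition restr :: "'v set \<Rightarrow> 'v lit set multiset \<Rightarrow> 'v lit set multiset" where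
  "restr V F = image_mset (\<lambda>C. C \<inter> litsof V) (filter_mset (\<lambda>C. vars_cl C \<inter> V \<noteq> {}) F)"

lemma vars_cl_inter: "vars_cl (C \<inter> litsof V) = vars_cl C \<inter> V"
  by (auto simp: vars_cl_def litsof_def)

lemma restr_mcs: "multi_clause_set F \<Longrightarrow> multi_clause_set (restr V F)"
  unfolding multi_clause_set_def restr_def clause_def by auto

lemma vars_restr: assumes "V \<subseteq> vars F" shows "vars (restr V F) = V"
proof
  show "vars (restr V F) \<subseteq> V"
    unfolding restr_def vars_def vars_cs_def by (auto simp: vars_cl_inter)
  show "V \<subseteq> vars (restr V F)"
  proof
    fix u assume u: "u \<in> V"
    then obtain C where C: "C \<in># F" "u \<in> vars_cl C" using assms vars_iff[of u F] by auto
    then have "C \<inter> litsof V \<in># restr V F" using u unfolding restr_def by auto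
    moreover have "u \<in> vars_cl (C \<inter> litsof V)" using C u by (simp add: vars_cl_inter)
    ultimately show "u \<in> vars (restr V F)" using vars_iff[of u "restr V F"] by auto
  qed
qed

lemma cnt_restr: assumes "W \<subseteq> V" shows "cnt (restr V F) W = cnt F W"
proof -
  have "cnt (restr V F) W = size (filter_mset (\<lambda>C. vars_cl C \<inter> V \<noteq> {} \<and> vars_cl (C \<inter> litsof V) \<inter> W \<noteq> {}) F)"
    unfolding cnt_def restr_def by (simp add: filter_mset_image_mset filter_filter_mset)
  also have "\<dots> = cnt F W"
    unfolding cnt_def using assms by (intro arg_cong[where f=size] filter_mset_cong) (auto simp: vars_cl_inter)
  finally show ?thesis .
qed

lemma size_restr: "size (restr V F) = cnt F V"
  unfolding restr_def cnt_def by simp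

lemma ld_restr: assumes "var_lit y \<in> V" shows "ld (restr V F) y = ld F y"
proof -
  have "ld (restr V F) y = size (filter_mset (\<lambda>C. vars_cl C \<inter> V \<noteq> {} \<and> y \<in> C \<inter> litsof V) F)"
    unfolding ld_def restr_def by (simp add: filter_mset_image_mset filter_filter_mset)
  also have "\<dots> = ld F y"
    unfolding ld_def using assms
    by (intro arg_cong[where f=size] filter_mset_cong) (auto simp: litsof_def vars_cl_def)
  finally show ?thesis .
qed

lemma vdeg_restr: "v \<in> V \<Longrightarrow> vdeg (restr V F) v = vdeg F v"
  unfolding vdeg_def by (simp add: ld_restr)

lemma restr_nonempty: "C \<in># restr V F \<Longrightarrow> C \<noteq> {}"
  unfolding restr_def by (auto simp: litsof_def vars_cl_def)

lemma lit_val_restrict: "var_lit y \<in> V \<Longrightarrow> lit_val (\<phi> |` V) y = lit_val \<phi> y"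
  by (rule lit_val_cong) simp

lemma lean_restr: assumes "lean F" shows "lean (restr V F)"
proof (rule ccontr)
  assume "\<not> lean (restr V F)"
  then obtain \<phi> where phi: "finite (dom \<phi>)" "autarky \<phi> (set_mset (restr V F))"
    "dom \<phi> \<inter> vars_cs (set_mset (restr V F)) \<noteq> {}"
    unfolding lean_def lean_cs_def by blast
  let ?p = "\<phi> |` V"
  have "finite (dom ?p)" using phi(1) by simp
  moreover have "autarky ?p (set_mset F)"
    unfolding autarky_def
  proof (intro ballI impI)
    fix C assume C: "C \<in> set_mset F" "\<exists>x\<in>C. lit_val ?p x = Some False"
    then obtain y where y: "y \<in> C" "lit_val ?p y = Some False" by blast
    have yV: "var_lit y \<in> V" using lit_val_dom[OF y(2)] by simp
    then have y2: "lit_val \<phi> y = Some False" using y(2) lit_val_restrict by metis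
    have "vars_cl C \<inter> V \<noteq> {}" using y(1) yV unfolding vars_cl_def by auto
    then have "C \<inter> litsof V \<in> set_mset (restr V F)" using C(1) unfolding restr_def by auto
    moreover have "y \<in> C \<inter> litsof V" using y(1) yV by (simp add: litsof_def)
    ultimately have "\<exists>z\<in>C \<inter> litsof V. lit_val \<phi> z = Some True"
      using phi(2) y2 unfolding autarky_def by (metis (no_types, lifting))
    then obtain z where z: "z \<in> C \<inter> litsof V" "lit_val \<phi> z = Some True" by blast
    then have "lit_val ?p z = Some True" using lit_val_restrict[of z V \<phi>] by (simp add: litsof_def)
    then show "\<exists>x\<in>C. lit_val ?p x = Some True" using z(1) by blast
  qed
  moreover have "dom ?p \<inter> vars_cs (set_mset F) \<noteq> {}"
  proof -
    obtain u where u: "u \<in> dom \<phi>" "u \<in> vars (restr V F)" using phi(3) unfolding vars_def by auto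
    then obtain C where C: "C \<in># restr V F" "u \<in> vars_cl C" using vars_iff[of u "restr V F"] by auto
    then obtain D where D: "D \<in># F" "C = D \<inter> litsof V" unfolding restr_def by auto
    have "u \<in> V" "u \<in> vars_cl D" using C(2) D(2) by (auto simp: vars_cl_inter)
    then have "u \<in> dom ?p \<inter> vars_cs (set_mset F)" using u(1) D(1) unfolding vars_cs_def by auto
    then show ?thesis by blast
  qed
  ultimately have "\<exists>\<psi>. finite (dom \<psi>) \<and> autarky \<psi> (set_mset F) \<and> dom \<psi> \<inter> vars_cs (set_mset F) \<noteq> {}"
    by (intro exI[of _ ?p]) auto
  then show False using assms unfolding lean_def lean_cs_def by auto
qed



definition assign :: "'v lit \<Rightarrow> 'v lit set multiset \<Rightarrow> 'v lit set multiset" where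
  "assign x G = image_mset (\<lambda>C. C - {comp x}) (filter_mset (\<lambda>C. x \<notin> C) G)"

lemma split2: "size (filter_mset P M) = size (filter_mset (\<lambda>C. \<not> Q C \<and> P C) M) + size (filter_mset (\<lambda>C. Q C \<and> P C) M)"
  by (induction M) auto

lemma assign_mcs: "multi_clause_set G \<Longrightarrow> multi_clause_set (assign x G)"
  unfolding multi_clause_set_def assign_def clause_def by auto

lemma size_assign: "size (assign x G) + ld G x = size G"
  unfolding assign_def ld_def using size_filter_split[of G "\<lambda>C. x \<in> C"] by simp

lemma vars_assign: "vars (assign x G) \<subseteq> vars G - {var_lit x}"
proof
  fix u assume "u \<in> vars (assign x G)"
  then obtain C where C: "C \<in># G" "x \<notin> C" "u \<in> vars_cl (C - {comp x})"
    unfolding assign_def using vars_iff[of u] by auto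
  then obtain y where y: "y \<in> C" "y \<noteq> comp x" "var_lit y = u" unfolding vars_cl_def by auto
  have "u \<noteq> var_lit x" using var_lit_eq[of y x] y C(2) by auto
  moreover have "u \<in> vars G" using C(1) y vars_iff[of u G] unfolding vars_cl_def by auto
  ultimately show "u \<in> vars G - {var_lit x}" by simp
qed

lemma ld_assign: assumes "var_lit y \<noteq> var_lit x"
  shows "ld (assign x G) y = size (filter_mset (\<lambda>C. x \<notin> C \<and> y \<in> C) G)"
proof -
  have "y \<noteq> comp x" using assms by auto
  then show ?thesis unfolding ld_def assign_def
    by (simp add: filter_mset_image_mset filter_filter_mset)
qed

lemma vdeg_assign:
  assumes "multi_clause_set G" "w \<noteq> var_lit x"
  shows "vdeg G w \<le> vdeg (assign x G) w + ld G x"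
proof -
  have a: "ld G (Pos w) = ld (assign x G) (Pos w) + size (filter_mset (\<lambda>C. x \<in> C \<and> Pos w \<in> C) G)"
    using split2[of "\<lambda>C. Pos w \<in> C" G "\<lambda>C. x \<in> C"] ld_assign[of "Pos w" x G] assms(2)
    unfolding ld_def by simp
  have b: "ld G (Neg w) = ld (assign x G) (Neg w) + size (filter_mset (\<lambda>C. x \<in> C \<and> Neg w \<in> C) G)"
    using split2[of "\<lambda>C. Neg w \<in> C" G "\<lambda>C. x \<in> C"] ld_assign[of "Neg w" x G] assms(2)
    unfolding ld_def by simp
  have c: "size (filter_mset (\<lambda>C. (x \<in> C \<and> Pos w \<in> C) \<and> (x \<in> C \<and> Neg w \<in> C)) G) = 0"
  proof (rule size_filter_zero)
    fix C assume "C \<in># G"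
    then have "clause C" using assms(1) by (simp add: multi_clause_set_def)
    then show "\<not> ((x \<in> C \<and> Pos w \<in> C) \<and> (x \<in> C \<and> Neg w \<in> C))"
      using clause_not_both[of C w] by blast
  qed
  have d: "size (filter_mset (\<lambda>C. (x \<in> C \<and> Pos w \<in> C) \<or> (x \<in> C \<and> Neg w \<in> C)) G) \<le> ld G x"
    unfolding ld_def by (rule size_filter_mono) auto
  show ?thesis
    using a b c d size_filter_or[of "\<lambda>C. x \<in> C \<and> Pos w \<in> C" G "\<lambda>C. x \<in> C \<and> Neg w \<in> C"]
    unfolding vdeg_def by linarith
qed

lemma autarkyI:
  "(\<And>C y. C \<in> G \<Longrightarrow> y \<in> C \<Longrightarrow> lit_val \<psi> y = Some False \<Longrightarrow> \<exists>z\<in>C. lit_val \<psi> z = Some True) \<Longrightarrow> autarky \<psi> G"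
  unfolding autarky_def by blast

lemma autarky_touch:
  assumes "autarky \<psi> G" "C \<in> G" "y \<in> C" "var_lit y \<in> dom \<psi>"
  shows "\<exists>z\<in>C. lit_val \<psi> z = Some True"
proof -
  obtain b where b: "\<psi> (var_lit y) = Some b" using assms(4) by auto
  have "lit_val \<psi> y = Some True \<or> lit_val \<psi> y = Some False"
    using b by (cases y; cases b) auto
  then show ?thesis
  proof
    assume "lit_val \<psi> y = Some True" then show ?thesis using assms(3) by blast
  next
    assume "lit_val \<psi> y = Some False"
    then show ?thesis using assms(1,2,3) unfolding autarky_def by blast
  qed
qed

lemma lit_val_empty[simp]: "lit_val Map.empty y = None"
  by (cases y) auto

lemma autarky_empty: "autarky Map.empty G"
  unfolding autarky_def by simp



lemma N_unfold: "k \<ge> 2 \<Longrightarrow> N k = Max ((\<lambda>i. min (2*i) (N (k - i + 1) + i)) ` {2..k})"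
  by (subst N.simps) simp

lemma N_small: "k \<le> 1 \<Longrightarrow> N k = 2"
  by (subst N.simps) simp

lemma N_term: assumes "2 \<le> i" "i \<le> k" shows "min (2*i) (N (k - i + 1) + i) \<le> N k"
proof -
  have "min (2*i) (N (k - i + 1) + i) \<le> Max ((\<lambda>i. min (2*i) (N (k - i + 1) + i)) ` {2..k})"
    by (rule Max_ge) (use assms in auto)
  then show ?thesis using N_unfold[of k] assms by simp
qed

lemma N_ge2: "N k \<ge> 2"
proof (cases "k \<le> 1")
  case True then show ?thesis by (simp add: N_small)
next
  case False
  then have "min (2*2) (N (k - 2 + 1) + 2) \<le> N k" by (intro N_term) auto
  then show ?thesis by linarith
qed

lemma N_ge_Suc: "k \<ge> 1 \<Longrightarrow> N k \<ge> k + 1"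
proof (cases "k \<le> 1")
  case True
  assume "k \<ge> 1" then have "k = 1" using True by simp
  then show ?thesis by (simp add: N_small)
next
  case False
  then have "min (2*k) (N (k - k + 1) + k) \<le> N k" by (intro N_term) auto
  moreover have "N (k - k + 1) = 2" by (simp add: N_small)
  ultimately show ?thesis using False by linarith
qed

lemma N_Suc_mono: "N k \<le> N (Suc k)"
proof (induction k rule: less_induct)
  case (less k)
  show ?case
  proof (cases "k \<le> 1")
    case True then show ?thesis using N_ge2[of "Suc k"] by (simp add: N_small)
  next
    case False
    have "N k = Max ((\<lambda>i. min (2*i) (N (k - i + 1) + i)) ` {2..k})" using False by (simp add: N_unfold)
    also have "\<dots> \<le> N (Suc k)"
    proof (rule Max.boundedI)
      show "finite ((\<lambda>i. min (2*i) (N (k - i + 1) + i)) ` {2..k})" by simp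
      show "(\<lambda>i. min (2*i) (N (k - i + 1) + i)) ` {2..k} \<noteq> {}" using False by auto
    next
      fix a assume "a \<in> (\<lambda>i. min (2*i) (N (k - i + 1) + i)) ` {2..k}"
      then obtain i where i: "2 \<le> i" "i \<le> k" "a = min (2*i) (N (k - i + 1) + i)" by auto
      have "N (k - i + 1) \<le> N (Suc (k - i + 1))" using less.IH[of "k - i + 1"] i by simp
      moreover have "Suc (k - i + 1) = Suc k - i + 1" using i by simp
      ultimately have "a \<le> min (2*i) (N (Suc k - i + 1) + i)" using i by simp
      also have "\<dots> \<le> N (Suc k)" by (rule N_term) (use i in auto)
      finally show "a \<le> N (Suc k)" .
    qed
    finally show ?thesis .
  qed
qed

lemma N_mono: "k \<le> k' \<Longrightarrow> N k \<le> N k'"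
  by (rule lift_Suc_mono_le[of N]) (auto intro: N_Suc_mono)



lemma vars_filter_sub: "vars (filter_mset P F) \<subseteq> vars F"
  unfolding vars_def vars_cs_def by auto

lemma mcs_filter: "multi_clause_set F \<Longrightarrow> multi_clause_set (filter_mset P F)"
  unfolding multi_clause_set_def by auto

lemma assign_lean:
  fixes G :: "'v lit set multiset"
  assumes mcs: "multi_clause_set G" and lean: "lean G"
    and red: "\<And>W. W \<noteq> {} \<Longrightarrow> W \<subseteq> vars G \<Longrightarrow> W \<noteq> vars G \<Longrightarrow>
               int (cnt G W) - int (card W) > int (size G) - int (card (vars G))"
    and IH: "\<And>H :: 'v lit set multiset. multi_clause_set H \<Longrightarrow> lean H \<Longrightarrow> vars H \<noteq> {} \<Longrightarrow>
               card (vars H) < card (vars G) \<Longrightarrow> surplus H \<ge> 1"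
    and xv: "var_lit x \<in> vars G"
  shows "lean (assign x G) \<and> vars (assign x G) = vars G - {var_lit x}"
proof -
  define v where "v = var_lit x"
  define F' where "F' = assign x G"
  have finG: "finite (vars G)" using mcs finite_vars by blast
  have mcsF': "multi_clause_set F'" unfolding F'_def using mcs by (rule assign_mcs)
  have varsF': "vars F' \<subseteq> vars G - {v}" unfolding F'_def v_def by (rule vars_assign)
  have finF': "finite (vars F')" using mcsF' finite_vars by blast
  define P where "P = (\<lambda>k. \<exists>\<psi>. autarky \<psi> (set_mset F') \<and> dom \<psi> \<subseteq> vars F' \<and> card (dom \<psi>) = k)"
  have P0: "P 0" unfolding P_def by (intro exI[of _ Map.empty]) (simp add: autarky_empty)
  have Pb: "\<forall>y. P y \<longrightarrow> y \<le> card (vars F')"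
  proof (intro allI impI)
    fix y assume "P y"
    then obtain \<psi> :: "'v \<rightharpoonup> bool" where "dom \<psi> \<subseteq> vars F'" "card (dom \<psi>) = y" unfolding P_def by blast
    then show "y \<le> card (vars F')" using card_mono[OF finF'] by metis
  qed
  obtain k where k: "P k" "\<forall>y. P y \<longrightarrow> y \<le> k" using Nat.ex_has_greatest_nat[OF P0 Pb] by blast
  obtain \<psi> where psi: "autarky \<psi> (set_mset F')" "dom \<psi> \<subseteq> vars F'" "card (dom \<psi>) = k"
    using k(1) unfolding P_def by blast
  define A where "A = dom \<psi>"
  have finA: "finite A" unfolding A_def using psi(2) finF' finite_subset by blast
  have maxi: "\<And>\<psi>'. autarky \<psi>' (set_mset F') \<Longrightarrow> dom \<psi>' \<subseteq> vars F' \<Longrightarrow> card (dom \<psi>') \<le> card A"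
  proof -
    fix \<psi>' assume "autarky \<psi>' (set_mset F')" "dom \<psi>' \<subseteq> vars F'"
    then have "P (card (dom \<psi>'))" unfolding P_def by blast
    then show "card (dom \<psi>') \<le> card A" using k(2) psi(3) unfolding A_def by simp
  qed
  define F'' where "F'' = filter_mset (\<lambda>C. vars_cl C \<inter> A = {}) F'"
  have varsF''A: "vars F'' \<inter> A = {}"
    unfolding F''_def vars_def vars_cs_def by auto
  have varsF''F': "vars F'' \<subseteq> vars F'" unfolding F''_def by (rule vars_filter_sub)
  have touchA: "\<And>C. C \<in># F' \<Longrightarrow> vars_cl C \<inter> A \<noteq> {} \<Longrightarrow> \<exists>z\<in>C. lit_val \<psi> z = Some True"
  proof -
    fix C assume C: "C \<in># F'" "vars_cl C \<inter> A \<noteq> {}"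
    then obtain y where y: "y \<in> C" "var_lit y \<in> A" unfolding vars_cl_def by auto
    show "\<exists>z\<in>C. lit_val \<psi> z = Some True"
      using autarky_touch[OF psi(1) _ y(1)] C(1) y(2) unfolding A_def by simp
  qed
  have satA: "\<And>C z. C \<in># F' \<Longrightarrow> z \<in> C \<Longrightarrow> lit_val \<psi> z = Some True \<Longrightarrow> var_lit z \<in> A"
    using lit_val_dom unfolding A_def by blast
  have claimB: "vars F'' = vars F' - A"
  proof
    show "vars F'' \<subseteq> vars F' - A" using varsF''A varsF''F' by blast
    show "vars F' - A \<subseteq> vars F''"
    proof
      fix u assume u: "u \<in> vars F' - A"
      show "u \<in> vars F''"
      proof (rule ccontr)
        assume nu: "u \<notin> vars F''"
        define \<psi>2 where "\<psi>2 = \<psi>(u \<mapsto> True)"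
        have "autarky \<psi>2 (set_mset F')"
        proof (rule autarkyI)
          fix C y assume C: "C \<in> set_mset F'" "y \<in> C" "lit_val \<psi>2 y = Some False"
          show "\<exists>z\<in>C. lit_val \<psi>2 z = Some True"
          proof (cases "vars_cl C \<inter> A = {}")
            case True
            then have "C \<in># F''" unfolding F''_def using C(1) by simp
            then have "var_lit y \<in> vars F''" using C(2) vars_iff[of "var_lit y" F''] unfolding vars_cl_def by auto
            then have "var_lit y \<noteq> u" "var_lit y \<notin> A" using nu varsF''A by auto
            then have "lit_val \<psi>2 y = lit_val \<psi> y" unfolding \<psi>2_def by (intro lit_val_cong) simp
            also have "\<dots> = None" using \<open>var_lit y \<notin> A\<close> unfolding A_def
              by (cases y) (auto simp: domIff)
            finally show ?thesis using C(3) by simp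
          next
            case False
            then obtain z where z: "z \<in> C" "lit_val \<psi> z = Some True" using touchA C(1) by blast
            have "var_lit z \<in> A" using satA[OF _ z(1) z(2)] C(1) by simp
            then have "var_lit z \<noteq> u" using u by blast
            then have "lit_val \<psi>2 z = lit_val \<psi> z" unfolding \<psi>2_def by (intro lit_val_cong) simp
            then show ?thesis using z by auto
          qed
        qed
        moreover have "dom \<psi>2 \<subseteq> vars F'" unfolding \<psi>2_def using psi(2) u by auto
        ultimately have "card (dom \<psi>2) \<le> card A" using maxi by blast
        moreover have "dom \<psi>2 = insert u A" unfolding \<psi>2_def A_def by simp
        ultimately show False using finA u by simp
      qed
    qed
  qed
  have claimA: "lean F''"
  proof (rule ccontr)
    assume "\<not> lean F''"
    then obtain \<chi> where chi: "finite (dom \<chi>)" "autarky \<chi> (set_mset F'')"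
      "dom \<chi> \<inter> vars F'' \<noteq> {}"
      unfolding lean_def lean_cs_def vars_def by blast
    define \<psi>2 where "\<psi>2 = \<psi> ++ (\<chi> |` vars F'')"
    have eqF'': "\<And>k. k \<in> vars F'' \<Longrightarrow> \<psi>2 k = \<chi> k"
    proof -
      fix k assume k: "k \<in> vars F''"
      then have "k \<notin> A" using varsF''A by blast
      then have "\<psi> k = None" unfolding A_def by (simp add: domIff)
      then show "\<psi>2 k = \<chi> k" unfolding \<psi>2_def using k by (cases "\<chi> k") (auto simp: map_add_def)
    qed
    have eqA: "\<And>k. k \<in> A \<Longrightarrow> \<psi>2 k = \<psi> k"
    proof -
      fix k assume k: "k \<in> A"
      then have "k \<notin> vars F''" using varsF''A by blast
      then show "\<psi>2 k = \<psi> k" unfolding \<psi>2_def by (simp add: map_add_def)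
    qed
    have "autarky \<psi>2 (set_mset F')"
    proof (rule autarkyI)
      fix C y assume C: "C \<in> set_mset F'" "y \<in> C" "lit_val \<psi>2 y = Some False"
      show "\<exists>z\<in>C. lit_val \<psi>2 z = Some True"
      proof (cases "vars_cl C \<inter> A = {}")
        case True
        then have CF'': "C \<in># F''" unfolding F''_def using C(1) by simp
        have inv: "\<And>z. z \<in> C \<Longrightarrow> var_lit z \<in> vars F''"
          using CF'' vars_iff[of _ F''] unfolding vars_cl_def by auto
        have "lit_val \<chi> y = Some False"
          using C(3) eqF''[OF inv[OF C(2)]] lit_val_cong[of \<psi>2 y \<chi>] by simp
        then obtain z where z: "z \<in> C" "lit_val \<chi> z = Some True"
          using chi(2) CF'' C(2) unfolding autarky_def by blast
        then have "lit_val \<psi>2 z = Some True"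
          using eqF''[OF inv[OF z(1)]] lit_val_cong[of \<psi>2 z \<chi>] by simp
        then show ?thesis using z(1) by blast
      next
        case False
        then obtain z where z: "z \<in> C" "lit_val \<psi> z = Some True" using touchA C(1) by blast
        have "var_lit z \<in> A" using satA[OF _ z(1) z(2)] C(1) by simp
        then have "lit_val \<psi>2 z = Some True"
          using eqA lit_val_cong[of \<psi>2 z \<psi>] z(2) by simp
        then show ?thesis using z(1) by blast
      qed
    qed
    moreover have domeq: "dom \<psi>2 = A \<union> (dom \<chi> \<inter> vars F'')" unfolding \<psi>2_def A_def by auto
    moreover have "dom \<psi>2 \<subseteq> vars F'" using domeq psi(2) varsF''F' unfolding A_def by blast
    ultimately have le: "card (dom \<psi>2) \<le> card A" using maxi by blast
    have finB: "finite (dom \<chi> \<inter> vars F'')" using chi(1) by simp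
    have "card (dom \<psi>2) = card A + card (dom \<chi> \<inter> vars F'')"
      unfolding domeq using finA finB varsF''A by (subst card_Un_disjoint) auto
    moreover have "card (dom \<chi> \<inter> vars F'') > 0" using finB chi(3) by (simp add: card_gt_0_iff)
    ultimately show False using le by simp
  qed
  define W where "W = vars G - insert v (vars F'')"
  have vG: "v \<in> vars G" using xv v_def by simp
  have vF'': "v \<notin> vars F''" using varsF''F' varsF' by blast
  have subF'': "insert v (vars F'') \<subseteq> vars G" using vG varsF''F' varsF' by blast
  have finF'': "finite (vars F'')" using finF' varsF''F' finite_subset by blast
  have Wempty: "W = {}"
  proof (rule ccontr)
    assume Wne: "W \<noteq> {}"
    have WG: "W \<subseteq> vars G" unfolding W_def by blast
    have WnG: "W \<noteq> vars G" using vG unfolding W_def by blast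
    have r: "int (cnt G W) - int (card W) > int (size G) - int (card (vars G))"
      using red[OF Wne WG WnG] .
    have cardW: "card W + card (insert v (vars F'')) = card (vars G)"
      unfolding W_def using card_Diff_subset[OF finite_subset[OF subF'' finG] subF''] card_mono[OF finG subF'']
      by simp
    have cardins: "card (insert v (vars F'')) = card (vars F'') + 1" using vF'' finF'' by simp
    have s1: "cnt G W = size (filter_mset (\<lambda>C. \<not> x \<in> C \<and> vars_cl C \<inter> W \<noteq> {}) G)
                       + size (filter_mset (\<lambda>C. x \<in> C \<and> vars_cl C \<inter> W \<noteq> {}) G)"
      unfolding cnt_def by (rule split2)
    have s2: "size (filter_mset (\<lambda>C. x \<in> C \<and> vars_cl C \<inter> W \<noteq> {}) G) \<le> ld G x"
      unfolding ld_def by (rule size_filter_mono) auto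
    have s3: "size (filter_mset (\<lambda>C. \<not> x \<in> C \<and> vars_cl C \<inter> W \<noteq> {}) G)
              \<le> size (filter_mset (\<lambda>C. x \<notin> C \<and> vars_cl (C - {comp x}) \<inter> A \<noteq> {}) G)"
    proof (rule size_filter_mono)
      fix C assume C: "C \<in># G" "\<not> x \<in> C \<and> vars_cl C \<inter> W \<noteq> {}"
      then obtain y where y: "y \<in> C" "var_lit y \<in> W" unfolding vars_cl_def by auto
      have "var_lit y \<noteq> v" using y(2) unfolding W_def by blast
      then have "y \<noteq> comp x" unfolding v_def by auto
      then have yC': "y \<in> C - {comp x}" using y(1) by simp
      have "C - {comp x} \<in># F'" unfolding F'_def assign_def using C by auto
      then have "var_lit y \<in> vars F'" using yC' vars_iff[of "var_lit y" F'] unfolding vars_cl_def by auto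
      then have "var_lit y \<in> A" using y(2) claimB unfolding W_def by blast
      then show "x \<notin> C \<and> vars_cl (C - {comp x}) \<inter> A \<noteq> {}" using C yC' unfolding vars_cl_def by auto
    qed
    have s4: "size (filter_mset (\<lambda>C. x \<notin> C \<and> vars_cl (C - {comp x}) \<inter> A \<noteq> {}) G) = cnt F' A"
      unfolding cnt_def F'_def assign_def by (simp add: filter_mset_image_mset filter_filter_mset)
    have s5: "size F' = cnt F' A + size F''"
      unfolding cnt_def F''_def using size_filter_split[of F' "\<lambda>C. vars_cl C \<inter> A \<noteq> {}"] by simp
    have s6: "size F' + ld G x = size G" unfolding F'_def by (rule size_assign)
    have small: "size F'' \<le> card (vars F'')"
      using r s1 s2 s3 s4 s5 s6 cardW cardins by linarith
    show False
    proof (cases "vars F'' = {}")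
      case False
      have "multi_clause_set F''" unfolding F''_def using mcsF' by (rule mcs_filter)
      moreover have "card (vars F'') < card (vars G)" using cardW cardins by linarith
      ultimately have "surplus F'' \<ge> 1" using IH[of F''] claimA False by simp
      moreover have "surplus F'' \<le> int (cnt F'' (vars F'')) - int (card (vars F''))"
        using surplus_le[OF finF'' False] by simp
      moreover have "cnt F'' (vars F'') \<le> size F''" by (rule cnt_le_size)
      ultimately show False using small by linarith
    next
      case True
      then have "size F'' = 0" using small by simp
      then have allA: "\<And>C. C \<in># F' \<Longrightarrow> vars_cl C \<inter> A \<noteq> {}"
        unfolding F''_def by (auto simp: filter_mset_eq_conv)
      define b where "b = (case x of Pos _ \<Rightarrow> True | Neg _ \<Rightarrow> False)"
      define \<phi> where "\<phi> = \<psi>(v \<mapsto> b)"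
      have xtrue: "lit_val \<phi> x = Some True" unfolding \<phi>_def b_def v_def by (cases x) auto
      have vA: "v \<notin> A" using psi(2) varsF' unfolding A_def by blast
      have "autarky \<phi> (set_mset G)"
      proof (rule autarkyI)
        fix C y assume C: "C \<in> set_mset G" "y \<in> C" "lit_val \<phi> y = Some False"
        show "\<exists>z\<in>C. lit_val \<phi> z = Some True"
        proof (cases "x \<in> C")
          case True then show ?thesis using xtrue by blast
        next
          case False
          then have C': "C - {comp x} \<in># F'" unfolding F'_def assign_def using C(1) by auto
          obtain z where z: "z \<in> C - {comp x}" "lit_val \<psi> z = Some True"
            using touchA[OF C' allA[OF C']] by blast
          have "var_lit z \<in> A" using satA[OF C' z(1) z(2)] .
          then have "var_lit z \<noteq> v" using vA by blast
          then have "lit_val \<phi> z = lit_val \<psi> z" unfolding \<phi>_def by (intro lit_val_cong) simp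
          then show ?thesis using z by auto
        qed
      qed
      moreover have "finite (dom \<phi>)" unfolding \<phi>_def using finA unfolding A_def by simp
      moreover have "v \<in> dom \<phi> \<inter> vars_cs (set_mset G)" unfolding \<phi>_def using vG by (simp add: vars_def)
      ultimately have "\<exists>\<phi>. finite (dom \<phi>) \<and> autarky \<phi> (set_mset G) \<and> dom \<phi> \<inter> vars_cs (set_mset G) \<noteq> {}"
        by (intro exI[of _ \<phi>]) auto
      then show False using lean unfolding lean_def lean_cs_def by auto
    qed
  qed
  have eqv: "vars F' = vars G - {v}"
    using Wempty varsF' claimB unfolding W_def by blast
  have "A = {}" using eqv claimB Wempty psi(2) unfolding W_def A_def by blast
  then have "F'' = F'" unfolding F''_def by simp
  then show ?thesis using claimA eqv unfolding F'_def v_def by simp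
qed



lemma reduced_case:
  fixes G :: "'v lit set multiset"
  assumes mcs: "multi_clause_set G" and lean: "lean G" and vne: "vars G \<noteq> {}"
    and nonemp: "\<And>C. C \<in># G \<Longrightarrow> C \<noteq> {}"
    and red: "\<And>W. W \<noteq> {} \<Longrightarrow> W \<subseteq> vars G \<Longrightarrow> W \<noteq> vars G \<Longrightarrow>
               int (cnt G W) - int (card W) > int (size G) - int (card (vars G))"
    and IH: "\<And>H :: 'v lit set multiset. multi_clause_set H \<Longrightarrow> lean H \<Longrightarrow> vars H \<noteq> {} \<Longrightarrow>
               card (vars H) < card (vars G) \<Longrightarrow> surplus H \<ge> 1 \<and> (\<exists>w\<in>vars H. vdeg H w \<le> N (nat (surplus H)))"
  shows "surplus G \<ge> 1 \<and> (\<exists>v\<in>vars G. vdeg G v \<le> N (nat (surplus G))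
          \<and> int (ld G (Pos v)) \<le> surplus G \<and> int (ld G (Neg v)) \<le> surplus G)"
proof -
  have finG: "finite (vars G)" using mcs finite_vars by blast
  define n where "n = card (vars G)"
  define c where "c = size G"
  have n1: "n \<ge> 1" unfolding n_def using finG vne by (simp add: Suc_le_eq card_gt_0_iff)
  have cntall: "cnt G (vars G) = c"
  proof -
    have "cnt G (vars G) = size (filter_mset (\<lambda>_. True) G)"
      unfolding cnt_def
    proof (intro arg_cong[where f=size] filter_mset_cong)
      fix C assume C: "C \<in># G"
      then obtain y where "y \<in> C" using nonemp by blast
      then have "var_lit y \<in> vars_cl C \<inter> vars G" using C vars_iff[of "var_lit y" G]
        unfolding vars_cl_def by auto
      then show "(vars_cl C \<inter> vars G \<noteq> {}) = True" by auto
    qed simp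
    then show ?thesis unfolding c_def by simp
  qed
  have surp: "surplus G = int c - int n"
  proof (rule antisym)
    show "surplus G \<le> int c - int n"
      using surplus_le[OF finG vne subset_refl] cntall unfolding n_def by simp
    show "int c - int n \<le> surplus G"
    proof (rule surplus_ge[OF finG vne])
      fix V assume V: "V \<noteq> {}" "V \<subseteq> vars G"
      show "int c - int n \<le> int (cnt G V) - int (card V)"
      proof (cases "V = vars G")
        case True then show ?thesis using cntall unfolding n_def by simp
      next
        case False then show ?thesis using red[OF V False] unfolding c_def n_def by simp
      qed
    qed
  qed
  show ?thesis
  proof (cases "n = 1")
    case True
    then obtain v where vG: "vars G = {v}" unfolding n_def using card_1_singletonE by blast
    have both: "\<And>C. C \<in># G \<Longrightarrow> Pos v \<in> C \<or> Neg v \<in> C"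
    proof -
      fix C assume C: "C \<in># G"
      then obtain y where y: "y \<in> C" using nonemp by blast
      then have "var_lit y \<in> vars G" using C vars_iff[of "var_lit y" G] unfolding vars_cl_def by auto
      then have "var_lit y = v" using vG by simp
      then show "Pos v \<in> C \<or> Neg v \<in> C" using y by (cases y) auto
    qed
    have notboth: "size (filter_mset (\<lambda>C. Pos v \<in> C \<and> Neg v \<in> C) G) = 0"
    proof (rule size_filter_zero)
      fix C assume "C \<in># G"
      then have "clause C" using mcs by (simp add: multi_clause_set_def)
      then show "\<not> (Pos v \<in> C \<and> Neg v \<in> C)" using clause_not_both[of C v] by blast
    qed
    have orall: "size (filter_mset (\<lambda>C. Pos v \<in> C \<or> Neg v \<in> C) G) = c"
    proof -
      have "filter_mset (\<lambda>C. Pos v \<in> C \<or> Neg v \<in> C) G = G"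
        using both by (simp add: filter_mset_eq_conv)
      then show ?thesis unfolding c_def by simp
    qed
    have vd: "vdeg G v = c"
      using size_filter_or[of "\<lambda>C. Pos v \<in> C" G "\<lambda>C. Neg v \<in> C"] notboth orall
      unfolding vdeg_def ld_def by simp
    have p1: "ld G (Pos v) \<ge> 1" "ld G (Neg v) \<ge> 1" using lean_ld_pos[OF lean, of v] vG by auto
    have s: "surplus G = int c - 1" using surp True by simp
    have c2: "c \<ge> 2" using vd p1 unfolding vdeg_def by simp
    have ns: "nat (surplus G) = c - 1" using s c2 by simp
    have "vdeg G v \<le> N (nat (surplus G))"
      unfolding ns using N_ge_Suc[of "c - 1"] c2 vd by simp
    moreover have "int (ld G (Pos v)) \<le> surplus G" "int (ld G (Neg v)) \<le> surplus G"
      using p1 vd s unfolding vdeg_def by simp_all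
    ultimately show ?thesis using s c2 vG by auto
  next
    case False
    then have n2: "n \<ge> 2" using n1 by simp
    have ldle: "\<And>y. var_lit y \<in> vars G \<Longrightarrow> int (ld G y) \<le> surplus G"
    proof -
      fix y assume y: "var_lit y \<in> vars G"
      have IH1: "\<And>H :: 'v lit set multiset. multi_clause_set H \<Longrightarrow> lean H \<Longrightarrow> vars H \<noteq> {} \<Longrightarrow>
               card (vars H) < card (vars G) \<Longrightarrow> surplus H \<ge> 1" using IH by blast
      have al: "lean (assign y G) \<and> vars (assign y G) = vars G - {var_lit y}"
        by (rule assign_lean[OF mcs lean red IH1 y]) auto
      have cv: "card (vars (assign y G)) = n - 1" using al y finG unfolding n_def by simp
      have ne: "vars (assign y G) \<noteq> {}" using cv n2 by auto
      have "surplus (assign y G) \<ge> 1"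
        using IH1[OF assign_mcs[OF mcs] conjunct1[OF al] ne] cv n2 unfolding n_def by simp
      moreover have "surplus (assign y G) \<le> int (cnt (assign y G) (vars (assign y G))) - int (n - 1)"
        using surplus_le[OF finite_vars[OF assign_mcs[OF mcs]] ne subset_refl] cv by simp
      moreover have "cnt (assign y G) (vars (assign y G)) \<le> size (assign y G)" by (rule cnt_le_size)
      moreover have "size (assign y G) + ld G y = c" unfolding c_def by (rule size_assign)
      ultimately show "int (ld G y) \<le> surplus G" using surp n2 by linarith
    qed
    have "Min (vdeg G ` vars G) \<in> vdeg G ` vars G"
      by (rule Min_in) (use finG vne in auto)
    then obtain v0 where v0: "v0 \<in> vars G" "vdeg G v0 = Min (vdeg G ` vars G)"
      by (metis imageE)
    have v0min: "\<And>u. u \<in> vars G \<Longrightarrow> vdeg G v0 \<le> vdeg G u"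
      using v0(2) finG by simp
    have s1: "surplus G \<ge> 1"
      using ldle[of "Pos v0"] lean_ld_pos[OF lean v0(1)] v0(1) by simp
    define x where "x = (if ld G (Neg v0) \<le> ld G (Pos v0) then Pos v0 else Neg v0)"
    define a where "a = ld G x"
    have xv: "var_lit x = v0" unfolding x_def by simp
    have va: "vdeg G v0 \<le> 2 * a" unfolding a_def x_def vdeg_def by auto
    have als: "int a \<le> surplus G" unfolding a_def using ldle xv v0(1) by simp
    have "vdeg G v0 \<le> N (nat (surplus G))"
    proof (cases "a \<le> 1")
      case True then show ?thesis using va N_ge2[of "nat (surplus G)"] by linarith
    next
      case False
      have IH1: "\<And>H :: 'v lit set multiset. multi_clause_set H \<Longrightarrow> lean H \<Longrightarrow> vars H \<noteq> {} \<Longrightarrow>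
               card (vars H) < card (vars G) \<Longrightarrow> surplus H \<ge> 1" using IH by blast
      define F' where "F' = assign x G"
      have al: "lean F' \<and> vars F' = vars G - {v0}"
        unfolding F'_def using assign_lean[OF mcs lean red IH1, of x] xv v0(1) by auto
      have cv: "card (vars F') = n - 1" using al v0(1) finG unfolding n_def by simp
      have ne: "vars F' \<noteq> {}" using cv n2 by auto
      have mF': "multi_clause_set F'" unfolding F'_def using mcs by (rule assign_mcs)
      obtain w where w: "w \<in> vars F'" "vdeg F' w \<le> N (nat (surplus F'))"
        using IH[OF mF' conjunct1[OF al] ne] cv n2 unfolding n_def by auto
      have "surplus F' \<le> int (cnt F' (vars F')) - int (n - 1)"
        using surplus_le[OF finite_vars[OF mF'] ne subset_refl] cv by simp
      moreover have "cnt F' (vars F') \<le> size F'" by (rule cnt_le_size)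
      moreover have "size F' + a = c" unfolding c_def F'_def a_def by (rule size_assign)
      ultimately have sF': "surplus F' \<le> surplus G - int a + 1" using surp n2 by linarith
      have "nat (surplus F') \<le> nat (surplus G) - a + 1" using sF' als by linarith
      then have Nle: "N (nat (surplus F')) \<le> N (nat (surplus G) - a + 1)" by (rule N_mono)
      have wv: "w \<noteq> v0" "w \<in> vars G" using w(1) al by auto
      have "vdeg G w \<le> vdeg F' w + a"
        unfolding F'_def a_def using vdeg_assign[OF mcs, of w x] wv xv by simp
      then have "vdeg G v0 \<le> N (nat (surplus G) - a + 1) + a"
        using v0min[OF wv(2)] w(2) Nle by linarith
      then have "vdeg G v0 \<le> min (2 * a) (N (nat (surplus G) - a + 1) + a)" using va by simp
      also have "\<dots> \<le> N (nat (surplus G))" by (rule N_term) (use False als in auto)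
      finally show ?thesis .
    qed
    moreover have "int (ld G (Pos v0)) \<le> surplus G" "int (ld G (Neg v0)) \<le> surplus G"
      using ldle v0(1) by auto
    ultimately show ?thesis using s1 v0(1) by blast
  qed
qed



definition Qprop :: "'v lit set multiset \<Rightarrow> bool" where
  "Qprop F \<longleftrightarrow> surplus F \<ge> 1 \<and> (\<exists>v\<in>vars F. vdeg F v \<le> N (nat (surplus F))
          \<and> int (ld F (Pos v)) \<le> surplus F \<and> int (ld F (Neg v)) \<le> surplus F)"

lemma main_ind:
  "\<forall>F :: 'v lit set multiset. multi_clause_set F \<longrightarrow> lean F \<longrightarrow> vars F \<noteq> {} \<longrightarrow> card (vars F) = n \<longrightarrow> Qprop F"
proof (induction n rule: less_induct)
  case (less n)
  show ?case
  proof (intro allI impI)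
    fix F :: "'v lit set multiset"
    assume mcs: "multi_clause_set F" and lean: "lean F" and vne: "vars F \<noteq> {}" and cn: "card (vars F) = n"
    have finF: "finite (vars F)" using mcs finite_vars by blast
    define AT where "AT = {V. V \<noteq> {} \<and> V \<subseteq> vars F \<and> surplus F = int (cnt F V) - int (card V)}"
    have finAT: "finite AT" unfolding AT_def by (rule finite_subset[of _ "Pow (vars F)"]) (use finF in auto)
    have neAT: "AT \<noteq> {}" using surplus_attained[OF finF vne] unfolding AT_def by blast
    obtain m where m: "m \<in> card ` AT" "\<not> (\<exists>x\<in>card ` AT. x < m)"
      using ex_min_if_finite[of "card ` AT"] finAT neAT by blast
    then obtain V where V: "V \<in> AT" "card V = m" by blast
    have Vmin: "\<And>W. W \<in> AT \<Longrightarrow> card V \<le> card W" using m(2) V(2) by force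
    have Vne: "V \<noteq> {}" and VF: "V \<subseteq> vars F" and sV: "surplus F = int (cnt F V) - int (card V)"
      using V(1) unfolding AT_def by auto
    define G where "G = restr V F"
    have mcsG: "multi_clause_set G" unfolding G_def using mcs by (rule restr_mcs)
    have leanG: "lean G" unfolding G_def using lean by (rule lean_restr)
    have vG: "vars G = V" unfolding G_def using VF by (rule vars_restr)
    have finG: "finite (vars G)" using mcsG finite_vars by blast
    have sizeG: "size G = cnt F V" unfolding G_def by (rule size_restr)
    have cntG: "\<And>W. W \<subseteq> V \<Longrightarrow> cnt G W = cnt F W" unfolding G_def by (rule cnt_restr)
    have sG: "surplus G = surplus F"
    proof (rule antisym)
      show "surplus G \<le> surplus F"
        using surplus_le[OF finG, of V] Vne vG cntG[of V] sV by simp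
      show "surplus F \<le> surplus G"
      proof (rule surplus_ge[OF finG])
        show "vars G \<noteq> {}" using vG Vne by simp
        fix W assume W: "W \<noteq> {}" "W \<subseteq> vars G"
        then show "surplus F \<le> int (cnt G W) - int (card W)"
          using surplus_le[OF finF W(1)] vG VF cntG[of W] by auto
      qed
    qed
    have red: "\<And>W. W \<noteq> {} \<Longrightarrow> W \<subseteq> vars G \<Longrightarrow> W \<noteq> vars G \<Longrightarrow>
               int (cnt G W) - int (card W) > int (size G) - int (card (vars G))"
    proof -
      fix W assume W: "W \<noteq> {}" "W \<subseteq> vars G" "W \<noteq> vars G"
      have WV: "W \<subseteq> V" "W \<subset> V" using W vG by auto
      have ge: "surplus F \<le> int (cnt F W) - int (card W)"
        using surplus_le[OF finF W(1)] WV VF by auto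
      have "surplus F \<noteq> int (cnt F W) - int (card W)"
      proof
        assume "surplus F = int (cnt F W) - int (card W)"
        then have "W \<in> AT" unfolding AT_def using W(1) WV VF by auto
        then have "card V \<le> card W" by (rule Vmin)
        moreover have "card W < card V" using psubset_card_mono[OF _ WV(2)] finF VF finite_subset by blast
        ultimately show False by simp
      qed
      then show "int (cnt G W) - int (card W) > int (size G) - int (card (vars G))"
        using ge cntG[OF WV(1)] sizeG vG sV by simp
    qed
    have QG: "Qprop G"
    proof (cases "card V < n")
      case True
      then show ?thesis using less.IH[of "card V"] mcsG leanG vG Vne by auto
    next
      case False
      then have cV: "card (vars G) = n" using card_mono[OF finF VF] cn vG by simp
      have nonemp: "\<And>C. C \<in># G \<Longrightarrow> C \<noteq> {}" unfolding G_def by (rule restr_nonempty)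
      have IH: "\<And>H :: 'v lit set multiset. multi_clause_set H \<Longrightarrow> lean H \<Longrightarrow> vars H \<noteq> {} \<Longrightarrow>
               card (vars H) < card (vars G) \<Longrightarrow> surplus H \<ge> 1 \<and> (\<exists>w\<in>vars H. vdeg H w \<le> N (nat (surplus H)))"
      proof -
        fix H :: "'v lit set multiset"
        assume H: "multi_clause_set H" "lean H" "vars H \<noteq> {}" "card (vars H) < card (vars G)"
        then have "Qprop H" using less.IH[of "card (vars H)"] cV by auto
        then show "surplus H \<ge> 1 \<and> (\<exists>w\<in>vars H. vdeg H w \<le> N (nat (surplus H)))"
          unfolding Qprop_def by blast
      qed
      show ?thesis unfolding Qprop_def
        using reduced_case[OF mcsG leanG _ nonemp red IH] vG Vne by simp
    qed
    then obtain v where v: "v \<in> V" "vdeg G v \<le> N (nat (surplus G))"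
      "int (ld G (Pos v)) \<le> surplus G" "int (ld G (Neg v)) \<le> surplus G" "surplus G \<ge> 1"
      unfolding Qprop_def vG by blast
    have "vdeg F v = vdeg G v" unfolding G_def using v(1) by (simp add: vdeg_restr)
    moreover have "ld F (Pos v) = ld G (Pos v)" "ld F (Neg v) = ld G (Neg v)"
      unfolding G_def using v(1) by (simp_all add: ld_restr)
    ultimately have "vdeg F v \<le> N (nat (surplus F)) \<and> int (ld F (Pos v)) \<le> surplus F \<and> int (ld F (Neg v)) \<le> surplus F"
      using v sG by simp
    moreover have "v \<in> vars F" using v(1) VF by blast
    moreover have "1 \<le> surplus F" using v(5) sG by simp
    ultimately show "Qprop F" unfolding Qprop_def by (intro conjI bexI[of _ v]) simp_all
  qed
qed

theorem theorem9p10: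
  fixes F :: "'v lit set multiset"
  assumes "multi_clause_set F" and "lean F" and "nvars F > 0"
  shows "minvdeg F \<le> enat (N (nat (surplus F)))
    \<and> (\<exists>v \<in> vars F. vdeg F v \<le> N (nat (surplus F))
          \<and> int (ld F (Pos v)) \<le> surplus F \<and> int (ld F (Neg v)) \<le> surplus F)"
proof -
  have fin: "finite (vars F)" using assms(1) finite_vars by blast
  have vne: "vars F \<noteq> {}" using assms(3) unfolding nvars_def by auto
  have "Qprop F" using main_ind assms(1,2) vne by blast
  then obtain v where v: "v \<in> vars F" "vdeg F v \<le> N (nat (surplus F))"
    "int (ld F (Pos v)) \<le> surplus F" "int (ld F (Neg v)) \<le> surplus F"
    unfolding Qprop_def by blast
  have "Min (vdeg F ` vars F) \<le> vdeg F v" using fin v(1) by simp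
  then have "minvdeg F \<le> enat (N (nat (surplus F)))"
    unfolding minvdeg_def using vne v(2) by simp
  then show ?thesis using v by blast
qed

end
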